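(* For all integers $n\ge k\ge1$, there exists a monotone $(n-k)$-admissible $k$-CNF formula $F$ on $n$ variables with $|\mathrm{sat}_{n-k}(F)|=S(n,n-k,k)$.
   Context: A $k$-CNF formula is a conjunction of clauses (disjunctions of literals) each of width at most $k$; it is monotone if no literal is negated. $\mathrm{sat}_t(F)$ is the set of satisfying assignments of Hamming weight exactly $t$; $F$ is $t$-admissible if it has no satisfying assignment of Hamming weight less than $t$; $S(n,t,k)$ is the maximum of $|\mathrm{sat}_t(F)|$ over all $t$-admissible $k$-CNF formulas $F$ on $n$ variables. *)

theory Defs
  imports Main
begin

text \<open>Variables are natural numbers; a formula on n variables uses variables 0..n-1.
A literal is a pair (i, b): b = True means the positive literal x_i, b = False means its negation.
An assignment is identified with the set of variables set to true; its Hamming weight is its cardinality.\<close>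

type_synonym lit = "nat \<times> bool"
type_synonym clause = "lit set"
type_synonym cnf = "clause set"

definition is_kCNF :: "nat \<Rightarrow> nat \<Rightarrow> cnf \<Rightarrow> bool" where
  "is_kCNF n k F \<longleftrightarrow> (\<forall>C\<in>F. finite C \<and> card C \<le> k \<and> (\<forall>(i, b)\<in>C. i < n))"

definition monotone_cnf :: "cnf \<Rightarrow> bool" where
  "monotone_cnf F \<longleftrightarrow> (\<forall>C\<in>F. \<forall>(i, b)\<in>C. b)"

definition satisfies :: "nat set \<Rightarrow> cnf \<Rightarrow> bool" where
  "satisfies A F \<longleftrightarrow> (\<forall>C\<in>F. \<exists>(i, b)\<in>C. (i \<in> A) = b)"

definition sat_t :: "nat \<Rightarrow> nat \<Rightarrow> cnf \<Rightarrow> nat set set" where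
  "sat_t n t F = {A. A \<subseteq> {0..<n} \<and> card A = t \<and> satisfies A F}"

definition admissible :: "nat \<Rightarrow> nat \<Rightarrow> cnf \<Rightarrow> bool" where
  "admissible n t F \<longleftrightarrow> (\<forall>A. A \<subseteq> {0..<n} \<and> card A < t \<longrightarrow> \<not> satisfies A F)"

definition S :: "nat \<Rightarrow> nat \<Rightarrow> nat \<Rightarrow> nat" where
  "S n t k = Max {card (sat_t n t F) | F. is_kCNF n k F \<and> admissible n t F}"

end

theory Submission
  imports Defs
begin

lemma card_sat_le: "card (sat_t n t F) \<le> 2 ^ n"
proof -
  have "sat_t n t F \<subseteq> Pow {0..<n}" by (auto simp: sat_t_def)
  hence "card (sat_t n t F) \<le> card (Pow {0..<n})" by (intro card_mono) auto
  thus ?thesis by (simp add: card_Pow)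
qed

lemma S_attained:
  "\<exists>F0. is_kCNF n k F0 \<and> admissible n t F0 \<and> card (sat_t n t F0) = S n t k
     \<and> (\<forall>F. is_kCNF n k F \<and> admissible n t F \<longrightarrow> card (sat_t n t F) \<le> S n t k)"
proof -
  let ?M = "{card (sat_t n t F) | F. is_kCNF n k F \<and> admissible n t F}"
  have fin: "finite ?M"
    by (rule finite_subset[of _ "{..2^n}"]) (auto simp: card_sat_le)
  have "is_kCNF n k {{}} \<and> admissible n t {{}}"
    by (auto simp: is_kCNF_def admissible_def satisfies_def)
  hence ne: "?M \<noteq> {}" by blast
  have "Max ?M \<in> ?M" using fin ne by (rule Max_in)
  then obtain F0 where F0: "is_kCNF n k F0" "admissible n t F0" "card (sat_t n t F0) = S n t k"
    by (auto simp: S_def)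
  moreover have "\<forall>F. is_kCNF n k F \<and> admissible n t F \<longrightarrow> card (sat_t n t F) \<le> S n t k"
    unfolding S_def using fin by (auto intro!: Max_ge)
  ultimately show ?thesis by blast
qed

theorem lemma5:
  fixes n k :: nat
  assumes "1 \<le> k" and "k \<le> n"
  shows "\<exists>F. is_kCNF n k F \<and> monotone_cnf F \<and> admissible n (n - k) F
              \<and> card (sat_t n (n - k) F) = S n (n - k) k"
proof -
  obtain F0 where F0: "is_kCNF n k F0" "admissible n (n-k) F0" "card (sat_t n (n-k) F0) = S n (n-k) k"
    and mx: "\<And>F. is_kCNF n k F \<Longrightarrow> admissible n (n-k) F \<Longrightarrow> card (sat_t n (n-k) F) \<le> S n (n-k) k"
    using S_attained by blast
  define G where "G = sat_t n (n-k) F0"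
  define F' where "F' = {(\<lambda>i. (i,True)) ` B | B. B \<subseteq> {0..<n} \<and> card B = k \<and> ({0..<n} - B) \<notin> G}"
  have kc: "is_kCNF n k F'"
    unfolding is_kCNF_def F'_def
  proof (intro ballI conjI)
    fix C assume "C \<in> {(\<lambda>i. (i,True)) ` B | B. B \<subseteq> {0..<n} \<and> card B = k \<and> ({0..<n} - B) \<notin> G}"
    then obtain B where B: "C = (\<lambda>i. (i,True)) ` B" "B \<subseteq> {0..<n}" "card B = k" by blast
    have fB: "finite B" using B(2) finite_subset by blast
    show "finite C" using B(1) fB by simp
    show "card C \<le> k" using B(1,3) card_image_le[OF fB] by metis
    show "case x of (i, b) \<Rightarrow> i < n" if "x \<in> C" for x using that B(1,2) by (auto simp: subset_iff)
  qed
  have mono: "monotone_cnf F'" by (auto simp: monotone_cnf_def F'_def)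
  have sat': "satisfies A F' \<longleftrightarrow> (\<forall>B. B \<subseteq> {0..<n} \<and> card B = k \<and> ({0..<n} - B) \<notin> G \<longrightarrow> A \<inter> B \<noteq> {})" for A
  proof -
    have h: "(\<exists>(i,b)\<in>(\<lambda>i. (i,True)) ` B. (i\<in>A) = b) \<longleftrightarrow> A \<inter> B \<noteq> {}" for B by auto
    show ?thesis unfolding satisfies_def F'_def
    proof
      assume L: "\<forall>C\<in>{(\<lambda>i. (i,True)) ` B | B. B \<subseteq> {0..<n} \<and> card B = k \<and> ({0..<n} - B) \<notin> G}. \<exists>(i, b)\<in>C. (i \<in> A) = b"
      show "\<forall>B. B \<subseteq> {0..<n} \<and> card B = k \<and> ({0..<n} - B) \<notin> G \<longrightarrow> A \<inter> B \<noteq> {}"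
      proof (intro allI impI)
        fix B assume "B \<subseteq> {0..<n} \<and> card B = k \<and> ({0..<n} - B) \<notin> G"
        hence "(\<lambda>i. (i,True)) ` B \<in> {(\<lambda>i. (i,True)) ` B | B. B \<subseteq> {0..<n} \<and> card B = k \<and> ({0..<n} - B) \<notin> G}" by blast
        with L have "\<exists>(i,b)\<in>(\<lambda>i. (i,True)) ` B. (i\<in>A) = b" by blast
        thus "A \<inter> B \<noteq> {}" using h by blast
      qed
    next
      assume R: "\<forall>B. B \<subseteq> {0..<n} \<and> card B = k \<and> ({0..<n} - B) \<notin> G \<longrightarrow> A \<inter> B \<noteq> {}"
      show "\<forall>C\<in>{(\<lambda>i. (i,True)) ` B | B. B \<subseteq> {0..<n} \<and> card B = k \<and> ({0..<n} - B) \<notin> G}. \<exists>(i, b)\<in>C. (i \<in> A) = b"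
      proof
        fix C assume "C \<in> {(\<lambda>i. (i,True)) ` B | B. B \<subseteq> {0..<n} \<and> card B = k \<and> ({0..<n} - B) \<notin> G}"
        then obtain B where "C = (\<lambda>i. (i,True)) ` B" "B \<subseteq> {0..<n} \<and> card B = k \<and> ({0..<n} - B) \<notin> G" by blast
        thus "\<exists>(i, b)\<in>C. (i \<in> A) = b" using R h by blast
      qed
    qed
  qed
  have sub: "G \<subseteq> sat_t n (n-k) F'"
  proof
    fix A assume A: "A \<in> G"
    hence A1: "A \<subseteq> {0..<n}" "card A = n - k" by (auto simp: G_def sat_t_def)
    have "satisfies A F'"
      unfolding sat'
    proof (intro allI impI)
      fix B assume B: "B \<subseteq> {0..<n} \<and> card B = k \<and> ({0..<n} - B) \<notin> G"
      show "A \<inter> B \<noteq> {}"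
      proof
        assume "A \<inter> B = {}"
        hence "A \<subseteq> {0..<n} - B" using A1 by auto
        moreover have "card ({0..<n} - B) = n - k" using B card_Diff_subset[of B "{0..<n}"] finite_subset[of B "{0..<n}"] by simp
        ultimately have "A = {0..<n} - B" using A1 by (intro card_subset_eq) auto
        thus False using A B by simp
      qed
    qed
    thus "A \<in> sat_t n (n-k) F'" using A1 by (simp add: sat_t_def)
  qed
  have adm: "admissible n (n-k) F'"
    unfolding admissible_def
  proof (intro allI impI notI)
    fix A assume A: "A \<subseteq> {0..<n} \<and> card A < n - k" and sA: "satisfies A F'"
    let ?R = "{0..<n} - A"
    have "card ?R = n - card A" using A card_Diff_subset[of A "{0..<n}"] finite_subset[of A "{0..<n}"] by simp
    hence "k + 1 \<le> card ?R" using A by linarith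
    then obtain B0 where B0: "B0 \<subseteq> ?R" "card B0 = k + 1"
      using obtain_subset_with_card_n by metis
    have fB0: "finite B0" using B0(1) finite_subset by blast
    have B0n: "B0 \<subseteq> {0..<n}" using B0 by auto
    have allG: "{0..<n} - (B0 - {x}) \<in> G" if x: "x \<in> B0" for x
    proof (rule ccontr)
      assume nG: "{0..<n} - (B0 - {x}) \<notin> G"
      have "card (B0 - {x}) = k" using x B0 fB0 by simp
      moreover have "B0 - {x} \<subseteq> {0..<n}" using B0n by blast
      ultimately have "A \<inter> (B0 - {x}) \<noteq> {}"
        using sat'[of A, THEN iffD1, OF sA, rule_format, of "B0 - {x}"] nG by blast
      thus False using B0 by auto
    qed
    let ?A' = "{0..<n} - B0"
    have "satisfies ?A' F0"
      unfolding satisfies_def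
    proof
      fix C assume C: "C \<in> F0"
      have fC: "finite C" "card C \<le> k" using F0(1) C by (auto simp: is_kCNF_def)
      have "card (fst ` C) \<le> k" using card_image_le[OF fC(1), of fst] fC(2) by linarith
      have "\<not> B0 \<subseteq> fst ` C"
      proof
        assume "B0 \<subseteq> fst ` C"
        hence "card B0 \<le> card (fst ` C)" by (rule card_mono[OF finite_imageI[OF fC(1)]])
        thus False using B0(2) \<open>card (fst ` C) \<le> k\<close> by linarith
      qed
      then obtain x where x: "x \<in> B0" "x \<notin> fst ` C" by blast
      have "{0..<n} - (B0 - {x}) \<in> G" using allG x(1) by blast
      hence "satisfies ({0..<n} - (B0 - {x})) F0" by (simp add: G_def sat_t_def)
      then obtain i b where ib: "(i,b) \<in> C" "(i \<in> {0..<n} - (B0 - {x})) = b"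
        using C unfolding satisfies_def by blast
      have "i \<noteq> x" using ib(1) x(2) by (metis fst_conv image_eqI)
      hence "(i \<in> ?A') = b" using ib(2) by auto
      thus "\<exists>(i, b)\<in>C. (i \<in> ?A') = b" using ib(1) by blast
    qed
    moreover have "card ?A' < n - k"
    proof -
      have "card ?A' = n - (k+1)" using B0n B0(2) card_Diff_subset[of B0 "{0..<n}"] fB0 by simp
      moreover have "k + 1 \<le> n" using card_mono[OF finite_atLeastLessThan B0n] B0(2) by simp
      ultimately show ?thesis by linarith
    qed
    ultimately show False using F0(2) unfolding admissible_def by blast
  qed
  have "card G \<le> card (sat_t n (n-k) F')"
    by (rule card_mono[OF _ sub]) (rule finite_subset[of _ "Pow {0..<n}"], auto simp: sat_t_def)
  moreover have "card (sat_t n (n-k) F') \<le> S n (n-k) k" using mx kc adm by blast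
  ultimately have "card (sat_t n (n-k) F') = S n (n-k) k" using F0(3) unfolding G_def by linarith
  thus ?thesis using kc mono adm by blast
qed

end
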